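(* Let $G=(V,E;w)$ be a graph with no isolated vertices and nonnegative edge weights $w$, and let $c$ be the cost function of the edge cover game on $G$. A vector $a\in\mathbb{R}_{\ge 0}^{V}$ satisfies $a(S)\le c(S)$ for all $S\subseteq V$ if and only if for every vertex $v\in V$ and every nonempty subset $T\subseteq N(v)$ we have $a(T\cup\{v\})\le \sum_{u\in T} w_{vu}$.
   Context: $N(v)$ is the set of neighbours of $v$. For $a\in\mathbb{R}^V$ and $S\subseteq V$, $a(S)=\sum_{i\in S}a_i$. The edge cover game on $G$ has player set $V$ and cost function $c:2^V\to\mathbb{R}_{\ge0}$, where $c(S)$ is the minimum total weight $\sum_{e\in K}w_e$ over edge sets $K\subseteq E$ such that every vertex of $S$ is incident to at least one edge of $K$ (equivalently, $K\subseteq E[S]\cup\delta(S)$, where $E[S]$ is the set of edges with both ends in $S$ and $\delta(S)$ the set of edges with exactly one end in $S$); $c(\emptyset)=0$. *)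

theory Defs
  imports Complex_Main
begin

definition simple_graph :: "'a set \<Rightarrow> 'a set set \<Rightarrow> bool" where
  "simple_graph V E \<longleftrightarrow> finite V \<and> (\<forall>e\<in>E. e \<subseteq> V \<and> card e = 2)"

definition neighbours :: "'a set set \<Rightarrow> 'a \<Rightarrow> 'a set" where
  "neighbours E v = {u. {v, u} \<in> E}"

definition edge_cover_of :: "'a set set \<Rightarrow> 'a set set \<Rightarrow> 'a set \<Rightarrow> bool" where
  "edge_cover_of E K S \<longleftrightarrow> K \<subseteq> E \<and> (\<forall>v\<in>S. \<exists>e\<in>K. v \<in> e)"

definition edge_cover_cost :: "'a set set \<Rightarrow> ('a set \<Rightarrow> real) \<Rightarrow> 'a set \<Rightarrow> real" where
  "edge_cover_cost E w S = Min {sum w K | K. edge_cover_of E K S}"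

end

theory Submission
  imports Defs
begin

lemma inj_pair: "inj_on (\<lambda>u. {v, u}) T"
  by (auto simp: inj_on_def doubleton_eq_iff)

lemma main_ineq:
  fixes V :: "'a set" and E :: "'a set set" and w :: "'a set \<Rightarrow> real" and a :: "'a \<Rightarrow> real"
  assumes g: "simple_graph V E"
    and wn: "\<forall>e\<in>E. w e \<ge> 0"
    and an: "\<forall>v\<in>V. a v \<ge> 0"
    and star: "\<forall>v\<in>V. \<forall>T. T \<subseteq> neighbours E v \<and> T \<noteq> {} \<longrightarrow>
              sum a (insert v T) \<le> (\<Sum>u\<in>T. w {v, u})"
    and fS: "finite S"
  shows "S \<subseteq> V \<Longrightarrow> edge_cover_of E K S \<Longrightarrow> sum a S \<le> sum w K"
  using fS
proof (induction S arbitrary: K rule: finite_psubset_induct)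
  case (psubset S)
  have fV: "finite V" and EV: "\<forall>e\<in>E. e \<subseteq> V \<and> card e = 2" using g by (auto simp: simple_graph_def)
  have fE: "finite E" using EV fV by (meson Pow_iff finite_Pow_iff rev_finite_subset subsetI)
  have KE: "K \<subseteq> E" and cov: "\<forall>v\<in>S. \<exists>e\<in>K. v \<in> e" using psubset.prems by (auto simp: edge_cover_of_def)
  have fK: "finite K" using KE fE finite_subset by blast
  show ?case
  proof (cases "S = {}")
    case True
    then show ?thesis using KE wn by (auto intro: sum_nonneg)
  next
    case False
    then obtain v where vS: "v \<in> S" by blast
    have vV: "v \<in> V" using vS psubset.prems by blast
    define T where "T = {u. {v, u} \<in> K}"
    define St where "St = (\<lambda>u. {v, u}) ` T"
    define K' where "K' = K - St"
    define S' where "S' = S - insert v T"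
    have StK: "St = {e\<in>K. v \<in> e}"
    proof
      show "St \<subseteq> {e\<in>K. v \<in> e}" by (auto simp: St_def T_def)
      show "{e\<in>K. v \<in> e} \<subseteq> St"
      proof
        fix e assume e: "e \<in> {e\<in>K. v \<in> e}"
        then have "card e = 2" using EV KE by auto
        then obtain x y where xy: "e = {x, y}" "x \<noteq> y" by (auto simp: card_2_iff)
        then have "\<exists>u. e = {v, u}" using e by auto
        then obtain u where "e = {v,u}" by blast
        then show "e \<in> St" using e by (auto simp: St_def T_def)
      qed
    qed
    obtain e where "e \<in> K" "v \<in> e" using cov vS by blast
    then have "St \<noteq> {}" using StK by blast
    then have Tne: "T \<noteq> {}" by (auto simp: St_def)
    have TN: "T \<subseteq> neighbours E v" using KE by (auto simp: T_def neighbours_def)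
    have TV: "T \<subseteq> V" using TN EV unfolding neighbours_def by blast
    have fT: "finite T" using TV fV finite_subset by blast
    have S'V: "S' \<subseteq> V" using psubset.prems S'_def by blast
    have cov': "edge_cover_of E K' S'"
      unfolding edge_cover_of_def
    proof
      show "K' \<subseteq> E" using KE K'_def by blast
      show "\<forall>x\<in>S'. \<exists>e\<in>K'. x \<in> e"
      proof
        fix x assume x: "x \<in> S'"
        then obtain e where e: "e \<in> K" "x \<in> e" using cov S'_def by blast
        have "e \<notin> St"
        proof
          assume "e \<in> St"
          then obtain u where "u \<in> T" "e = {v,u}" by (auto simp: St_def)
          then show False using x e S'_def by auto
        qed
        then show "\<exists>e\<in>K'. x \<in> e" using e K'_def by blast
      qed
    qed
    have "S' \<subset> S" using vS S'_def by blast
    then have IH: "sum a S' \<le> sum w K'" using psubset.IH S'V cov' by blast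
    have "sum a S \<le> sum a (insert v T \<union> S)"
      using an TV vV psubset.prems fT psubset.hyps
      by (intro sum_mono2) auto
    also have "insert v T \<union> S = insert v T \<union> S'" using S'_def by blast
    also have "sum a (insert v T \<union> S') = sum a (insert v T) + sum a S'"
      using fT psubset.hyps S'_def by (intro sum.union_disjoint) auto
    also have "sum a (insert v T) \<le> (\<Sum>u\<in>T. w {v, u})"
      using star vV TN Tne by blast
    also have "(\<Sum>u\<in>T. w {v, u}) = sum w St"
      unfolding St_def using sum.reindex[OF inj_pair, of w v T] by simp
    also have "sum w St + sum a S' \<le> sum w St + sum w K'" using IH by simp
    also have "sum w St + sum w K' = sum w K"
      unfolding K'_def using fK StK by (metis sum.subset_diff Diff_iff mem_Collect_eq subsetI add.commute)
    finally show ?thesis by simp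
  qed
qed

theorem lemma5:
  fixes V :: "'a set" and E :: "'a set set" and w :: "'a set \<Rightarrow> real" and a :: "'a \<Rightarrow> real"
  assumes "simple_graph V E"
    and "\<forall>v\<in>V. \<exists>e\<in>E. v \<in> e"
    and "\<forall>e\<in>E. w e \<ge> 0"
    and "\<forall>v\<in>V. a v \<ge> 0"
  shows "(\<forall>S\<subseteq>V. sum a S \<le> edge_cover_cost E w S) \<longleftrightarrow>
         (\<forall>v\<in>V. \<forall>T. T \<subseteq> neighbours E v \<and> T \<noteq> {} \<longrightarrow>
              sum a (insert v T) \<le> (\<Sum>u\<in>T. w {v, u}))"
proof -
  have fV: "finite V" and EV: "\<forall>e\<in>E. e \<subseteq> V \<and> card e = 2" using assms(1) by (auto simp: simple_graph_def)
  have fE: "finite E" using EV fV by (meson Pow_iff finite_Pow_iff rev_finite_subset subsetI)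
  have fin: "finite {sum w K | K. edge_cover_of E K S}" for S
  proof -
    have "{sum w K | K. edge_cover_of E K S} \<subseteq> sum w ` Pow E"
      by (auto simp: edge_cover_of_def)
    then show ?thesis using fE finite_subset by blast
  qed
  show ?thesis
  proof
    assume H: "\<forall>S\<subseteq>V. sum a S \<le> edge_cover_cost E w S"
    show "\<forall>v\<in>V. \<forall>T. T \<subseteq> neighbours E v \<and> T \<noteq> {} \<longrightarrow>
              sum a (insert v T) \<le> (\<Sum>u\<in>T. w {v, u})"
    proof (intro ballI allI impI)
      fix v T assume vV: "v \<in> V" and T: "T \<subseteq> neighbours E v \<and> T \<noteq> {}"
      have TV: "T \<subseteq> V" using T EV unfolding neighbours_def by blast
      define K where "K = (\<lambda>u. {v, u}) ` T"
      have cov: "edge_cover_of E K (insert v T)"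
        using T by (auto simp: edge_cover_of_def K_def neighbours_def)
      have "sum a (insert v T) \<le> edge_cover_cost E w (insert v T)"
        using H vV TV by blast
      also have "\<dots> \<le> sum w K"
        unfolding edge_cover_cost_def using cov fin by (intro Min_le) auto
      also have "\<dots> = (\<Sum>u\<in>T. w {v, u})"
        unfolding K_def using sum.reindex[OF inj_pair, of w v T] by simp
      finally show "sum a (insert v T) \<le> (\<Sum>u\<in>T. w {v, u})" .
    qed
  next
    assume H: "\<forall>v\<in>V. \<forall>T. T \<subseteq> neighbours E v \<and> T \<noteq> {} \<longrightarrow>
              sum a (insert v T) \<le> (\<Sum>u\<in>T. w {v, u})"
    show "\<forall>S\<subseteq>V. sum a S \<le> edge_cover_cost E w S"
    proof (intro allI impI)
      fix S assume SV: "S \<subseteq> V"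
      have fS: "finite S" using SV fV finite_subset by blast
      have ne: "{sum w K | K. edge_cover_of E K S} \<noteq> {}"
        using assms(2) SV by (auto simp: edge_cover_of_def)
      show "sum a S \<le> edge_cover_cost E w S"
        unfolding edge_cover_cost_def
        using main_ineq[OF assms(1) assms(3) assms(4) H fS SV] fin ne
        by (subst Min_ge_iff) auto
    qed
  qed
qed

end
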